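(* Let $\mathcal{O}$ be the ring of integers of $\mathbb{Q}(\sqrt{-11})$ and $X=\frac12(1+\sqrt{-11})$. Let $n\ge0$ and $z=\sum_{j=0}^n\alpha_jX^j\in\mathcal{O}$ with $\alpha_j\in\{-1,0,1\}$. Then there exist $\beta_j\in\{-1,0,1\}$, $0\le j\le n+2$, such that $z+1=\sum_{j=0}^{n+2}\beta_jX^j$. *)

theory Defs
  imports Complex_Main
begin

definition X11 :: complex where
  "X11 = (1 + \<i> * complex_of_real (sqrt 11)) / 2"

end

theory Submission
  imports Defs
begin

lemma X11_eq: "X11 = Complex (1/2) (sqrt 11 / 2)"
  by (simp add: X11_def complex_eq_iff)

lemma X11_sq: "X11 * X11 = X11 - 3"
  unfolding X11_eq by (simp add: complex_eq_iff)

lemma step_exists: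
  fixes x a b :: int
  assumes "x \<in> {-1,0,1}" "a \<in> {-1,0,1}" "b \<in> {-1,0,1}" "a + b \<in> {-1,0,1}"
  shows "\<exists>d k. d \<in> {-1,0,1} \<and> k \<in> {-1,0,1} \<and> x + a = d + 3*k \<and> k + b \<in> {-1,0,1}"
proof -
  have r: "-1 \<le> x" "x \<le> 1" "-1 \<le> a" "a \<le> 1" "-1 \<le> b" "b \<le> 1" "-1 \<le> a+b" "a+b \<le> 1"
    using assms by auto
  have m: "\<And>t::int. -1 \<le> t \<Longrightarrow> t \<le> 1 \<Longrightarrow> t \<in> {-1,0,1}" by auto
  consider "x+a=2" | "x+a=-2" | "-1\<le>x+a \<and> x+a\<le>1" using r by linarith
  then show ?thesis
  proof cases
    case 1
    then have "-1 \<in> {-1,0,1::int} \<and> (1::int) \<in> {-1,0,1} \<and> x + a = -1 + 3*1 \<and> 1 + b \<in> {-1,0,1}"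
      using r by (intro conjI m) auto
    then show ?thesis by blast
  next
    case 2
    then have "1 \<in> {-1,0,1::int} \<and> (-1::int) \<in> {-1,0,1} \<and> x + a = 1 + 3*(-1) \<and> -1 + b \<in> {-1,0,1}"
      using r by (intro conjI m) auto
    then show ?thesis by blast
  next
    case 3
    then have "x+a \<in> {-1,0,1::int} \<and> (0::int) \<in> {-1,0,1} \<and> x + a = (x+a) + 3*0 \<and> 0 + b \<in> {-1,0,1}"
      using r by (intro conjI m) auto
    then show ?thesis by blast
  qed
qed

lemma step_identity:
  fixes x a b d k :: int
  assumes "x + a = d + 3*k"
  shows "of_int x + (of_int a + of_int b * X11) =
     of_int d + X11 * (of_int (k+b) + of_int (-k) * X11)"
proof -
  have "of_int x + of_int a = (of_int d + 3 * of_int k :: complex)"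
    using arg_cong[OF assms, of "of_int :: int \<Rightarrow> complex"] by simp
  then have "of_int x + (of_int a + of_int b * X11) = of_int d + 3 * of_int k + of_int b * X11"
    by (simp add: algebra_simps)
  also have "\<dots> = of_int d + X11 * (of_int (k+b) + of_int (-k) * X11)"
  proof -
    have q: "X11 * (X11 * of_int k) = (X11 - 3) * of_int k" by (metis X11_sq mult.assoc)
    show ?thesis by (simp add: algebra_simps q)
  qed
  finally show ?thesis .
qed

lemma gen:
  "\<forall>\<alpha> a b. (\<forall>j<m. \<alpha> j \<in> {-1, 0, 1::int}) \<longrightarrow> a \<in> {-1,0,1} \<longrightarrow> b \<in> {-1,0,1} \<longrightarrow> a + b \<in> {-1,0,1} \<longrightarrow>
   (\<exists>\<beta> :: nat \<Rightarrow> int. (\<forall>j<m+2. \<beta> j \<in> {-1, 0, 1}) \<and>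
     (\<Sum>j<m. of_int (\<alpha> j) * X11 ^ j) + (of_int a + of_int b * X11) = (\<Sum>j<m+2. of_int (\<beta> j) * X11 ^ j))"
proof (induction m)
  case 0
  show ?case
  proof (intro allI impI)
    fix \<alpha> :: "nat \<Rightarrow> int" and a b :: int
    assume "a \<in> {-1,0,1}" "b \<in> {-1,0,1}"
    then show "\<exists>\<beta> :: nat \<Rightarrow> int. (\<forall>j<0+2. \<beta> j \<in> {-1, 0, 1}) \<and>
     (\<Sum>j<0. of_int (\<alpha> j) * X11 ^ j) + (of_int a + of_int b * X11) = (\<Sum>j<0+2. of_int (\<beta> j) * X11 ^ j)"
      by (intro exI[of _ "\<lambda>j. if j = 0 then a else b"]) (auto simp: numeral_2_eq_2 less_Suc_eq)
  qed
next
  case (Suc m)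
  show ?case
  proof (intro allI impI)
    fix \<alpha> :: "nat \<Rightarrow> int" and a b :: int
    assume h: "\<forall>j<Suc m. \<alpha> j \<in> {-1,0,1}" "a \<in> {-1,0,1}" "b \<in> {-1,0,1}" "a + b \<in> {-1,0,1}"
    obtain d k where dk: "d \<in> {-1,0,1}" "k \<in> {-1,0,1}" "\<alpha> 0 + a = d + 3*k" "k + b \<in> {-1,0,1}"
      using step_exists[of "\<alpha> 0" a b] h by auto
    have h2: "\<forall>j<m. \<alpha> (Suc j) \<in> {-1,0,1}" using h(1) by auto
    have h3: "(k+b) + (-k) \<in> {-1,0,1::int}" using h(3) by simp
    have h4: "-k \<in> {-1,0,1::int}" using dk(2) by auto
    obtain \<beta> where b1: "\<forall>j<m+2. \<beta> j \<in> {-1, 0, 1::int}" and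
      b2: "(\<Sum>j<m. of_int (\<alpha> (Suc j)) * X11 ^ j) + (of_int (k+b) + of_int (-k) * X11) = (\<Sum>j<m+2. of_int (\<beta> j) * X11 ^ j)"
      using mp[OF mp[OF mp[OF mp[OF spec[OF spec[OF spec[OF Suc.IH, of "\<lambda>j. \<alpha> (Suc j)"], of "k+b"], of "-k"] h2] dk(4)] h4] h3]
      by (elim exE conjE) (rule that)
    define \<gamma> where "\<gamma> = case_nat d \<beta>"
    have g1: "\<forall>j<Suc m+2. \<gamma> j \<in> {-1,0,1}"
    proof (intro allI impI)
      fix j assume jl: "j < Suc m + 2"
      show "\<gamma> j \<in> {-1,0,1}"
      proof (cases j)
        case 0 then show ?thesis using dk(1) by (simp add: \<gamma>_def)
      next
        case (Suc i) then have "i < m+2" using jl by simp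
        then show ?thesis using b1 Suc by (simp add: \<gamma>_def)
      qed
    qed
    have "(\<Sum>j<Suc m. of_int (\<alpha> j) * X11 ^ j) + (of_int a + of_int b * X11)
       = of_int (\<alpha> 0) + (of_int a + of_int b * X11) + X11 * (\<Sum>j<m. of_int (\<alpha> (Suc j)) * X11 ^ j)"
      by (simp only: sum.lessThan_Suc_shift) (simp add: sum_distrib_left algebra_simps)
    also have "\<dots> = of_int d + X11 * ((\<Sum>j<m. of_int (\<alpha> (Suc j)) * X11 ^ j) + (of_int (k+b) + of_int (-k) * X11))"
      using step_identity[OF dk(3), of b] by (simp add: algebra_simps)
    also have "\<dots> = of_int d + X11 * (\<Sum>j<m+2. of_int (\<beta> j) * X11 ^ j)"
      using b2 by simp
    also have "\<dots> = (\<Sum>j<Suc m+2. of_int (\<gamma> j) * X11 ^ j)"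
      unfolding \<gamma>_def
      by (simp only: add_Suc sum.lessThan_Suc_shift) (simp add: sum_distrib_left algebra_simps)
    finally show "\<exists>\<beta> :: nat \<Rightarrow> int. (\<forall>j<Suc m+2. \<beta> j \<in> {-1, 0, 1}) \<and>
     (\<Sum>j<Suc m. of_int (\<alpha> j) * X11 ^ j) + (of_int a + of_int b * X11) = (\<Sum>j<Suc m+2. of_int (\<beta> j) * X11 ^ j)"
      using g1 by blast
  qed
qed

theorem lemma6p7:
  fixes n :: nat and \<alpha> :: "nat \<Rightarrow> int"
  assumes "\<forall>j\<le>n. \<alpha> j \<in> {-1, 0, 1}"
  shows "\<exists>\<beta> :: nat \<Rightarrow> int. (\<forall>j\<le>n+2. \<beta> j \<in> {-1, 0, 1}) \<and>
           (\<Sum>j\<le>n. of_int (\<alpha> j) * X11 ^ j) + 1 = (\<Sum>j\<le>n+2. of_int (\<beta> j) * X11 ^ j)"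
proof -
  have h: "\<forall>j<Suc n. \<alpha> j \<in> {-1,0,1}" using assms by (auto simp: less_Suc_eq_le)
  have c1: "(1::int) \<in> {-1,0,1}" "(0::int) \<in> {-1,0,1}" "(1::int) + 0 \<in> {-1,0,1}" by auto
  obtain \<beta> where b1: "\<forall>j<Suc n+2. \<beta> j \<in> {-1, 0, 1::int}" and
    b2: "(\<Sum>j<Suc n. of_int (\<alpha> j) * X11 ^ j) + (of_int 1 + of_int 0 * X11) = (\<Sum>j<Suc n+2. of_int (\<beta> j) * X11 ^ j)"
    using mp[OF mp[OF mp[OF mp[OF spec[OF spec[OF spec[OF gen[of "Suc n"], of \<alpha>], of 1], of 0] h] c1(1)] c1(2)] c1(3)]
    by (elim exE conjE) (rule that)
  have b3: "(\<Sum>j<Suc n. of_int (\<alpha> j) * X11 ^ j) + 1 = (\<Sum>j<Suc n+2. of_int (\<beta> j) * X11 ^ j)"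
    using b2 by simp
  have e: "{..<Suc n} = {..n}" "{..<Suc n + 2} = {..n+2}" by auto
  have b4: "\<forall>j\<le>n+2. \<beta> j \<in> {-1, 0, 1::int}"
    using b1 by (simp add: less_Suc_eq_le)
  show ?thesis
    using b4 b3 unfolding e by blast
qed

end
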